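(* Let $\mathbf{MB}$ be the modification of a Standard Bloom filter in which each hash function $h_i$ ($i\in[k]$) is replaced by a truly random function $f_i : U \to [m]$. Let $\varepsilon\in(0,1)$ and $n\in\mathbb{N}$. Then $\mathbf{MB}$ is not $(n,t,\delta)$-resilient under the BP test for any $t\in\mathbb{N}$ and any $\delta\in(0,1)$ with $\delta<p_s$, where $p_s$ is the saturation probability of $\mathbf{MB}$.
   Context: A Standard Bloom filter with parameters $m,k$ stores a set $S\subseteq U$ (a finite universe of size $u$) as a bit string $M\in\{0,1\}^m$, initially all zeros, by setting bit $h_i(x)$ to $1$ for every $x\in S$ and $i\in[k]$, where $h_i:U\to[m]$; a query on $x$ returns $1$ iff all bits $h_i(x)$, $i\in[k]$, equal $1$. In $\mathbf{MB}$ the $h_i$ are truly random functions $f_i$. The saturation probability $p_s$ is the probability that, after encoding a set of size $n$, every bit of $M$ equals $1$. An element $x\notin S$ with query answer $1$ is a false positive. BP test with parameter $\delta$ (for an $(n,\delta)$-Bloom filter $\mathbf{B}=(\mathbf{B}_1,\mathbf{B}_2)$, security parameter $\lambda$): an adversary $\mathcal{A}=(\mathcal{A}_1,\mathcal{A}_2)$ plays: $\mathcal{A}_1(1^{\lambda+n\log u})$ outputs $S\subseteq U$ with $|S|=n$; $M\gets\mathbf{B}_1(1^{\lambda+n\log u},S)$; $\mathcal{A}_2(1^{\lambda+n\log u},S)$ makes at most $t$ adaptive queries $x_1,\dots,x_t$ to $\mathbf{B}_2(M,\cdot)$ and then outputs $(b,x^* )$ with $b\in\{0,1\}$ and $x^*\notin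 S\cup\{x_1,\dots,x_t\}$. The profit $C_{\mathcal{A}}$ is $1/\delta$ if $b=1$ and $x^*$ is a false positive, $-1/(1-\delta)$ if $b=1$ and $x^*$ is not a false positive, and $0$ if $b=0$. $\mathbf{B}$ is $(n,t,\delta)$-resilient under the BP test if for every adversary there is a negligible function $\mathrm{negl}$ with $\mathbb{E}[C_{\mathcal{A}}]\le\mathrm{negl}(\lambda)$, the expectation over the randomness of $\mathbf{B}$ and $\mathcal{A}$. *)

theory Defs
  imports "HOL-Probability.Probability"
begin

text \<open>
The universe U is a finite type 'u.  The k hash functions are packaged as one function
h :: nat \<times> 'u \<Rightarrow> nat, h (i, x) = f_i(x) \<in> [m] = {0..<m}, for i < k.
The memory M \<in> {0,1}^m is represented by the set of positions (in {0..<m}) whose bit is 1.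
\<close>

definition hash_space :: "nat \<Rightarrow> nat \<Rightarrow> (nat \<times> 'u::finite \<Rightarrow> nat) set" where
  "hash_space m k = PiE ({..<k} \<times> UNIV) (\<lambda>_. {..<m})"

definition MB_hashes :: "nat \<Rightarrow> nat \<Rightarrow> (nat \<times> 'u::finite \<Rightarrow> nat) pmf" where
  "MB_hashes m k = pmf_of_set (hash_space m k)"

definition bf_encode :: "nat \<Rightarrow> (nat \<times> 'u \<Rightarrow> nat) \<Rightarrow> 'u set \<Rightarrow> nat set" where
  "bf_encode k h S = {h (i, x) | i x. i < k \<and> x \<in> S}"

definition bf_query :: "nat \<Rightarrow> (nat \<times> 'u \<Rightarrow> nat) \<Rightarrow> nat set \<Rightarrow> 'u \<Rightarrow> bool" where
  "bf_query k h M x = (\<forall>i<k. h (i, x) \<in> M)"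

definition sat_prob_of :: "nat \<Rightarrow> nat \<Rightarrow> 'u::finite set \<Rightarrow> real" where
  "sat_prob_of m k S = measure_pmf.prob (MB_hashes m k) {h. bf_encode k h S = {..<m}}"

text \<open>Saturation probability p_s for sets of size n (it does not depend on the particular
set by symmetry; we take a fixed set of size n).\<close>
definition sat_prob :: "'u::finite itself \<Rightarrow> nat \<Rightarrow> nat \<Rightarrow> nat \<Rightarrow> real" where
  "sat_prob _ m k n = sat_prob_of m k (SOME S :: 'u set. card S = n)"

text \<open>A deterministic adaptive query strategy: given the list of oracle answers so far,
either make the next query (Inl x) or stop and output (b, x*) (Inr (b, x*)).
Randomised second-stage adversaries are distributions over such strategies.\<close>
type_synonym 'u strategy = "bool list \<Rightarrow> 'u + (bool \<times> 'u)"

fun run_strategy :: "'u strategy \<Rightarrow> ('u \<Rightarrow> bool) \<Rightarrow> nat \<Rightarrow> bool list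
                      \<Rightarrow> ('u list \<times> (bool \<times> 'u)) option" where
  "run_strategy \<sigma> orc 0 hist = (case \<sigma> hist of Inl _ \<Rightarrow> None | Inr r \<Rightarrow> Some ([], r))"
| "run_strategy \<sigma> orc (Suc t) hist = (case \<sigma> hist of
      Inr r \<Rightarrow> Some ([], r)
    | Inl x \<Rightarrow> map_option (\<lambda>(qs, r). (x # qs, r)) (run_strategy \<sigma> orc t (hist @ [orc x])))"

definition valid_adversary ::
  "nat \<Rightarrow> nat \<Rightarrow> (nat \<Rightarrow> 'u set pmf) \<Rightarrow> (nat \<Rightarrow> 'u set \<Rightarrow> 'u strategy pmf) \<Rightarrow> bool" where
  "valid_adversary n t A1 A2 \<longleftrightarrow>
     (\<forall>sec. \<forall>S \<in> set_pmf (A1 sec). card S = n \<and>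
        (\<forall>\<sigma> \<in> set_pmf (A2 sec S). \<forall>orc. \<exists>qs b x.
            run_strategy \<sigma> orc t [] = Some (qs, (b, x)) \<and> x \<notin> S \<and> x \<notin> set qs))"

definition bp_profit :: "real \<Rightarrow> bool \<Rightarrow> bool \<Rightarrow> real" where
  "bp_profit \<delta> b fp = (if b then (if fp then 1 / \<delta> else - 1 / (1 - \<delta>)) else 0)"

definition bp_game ::
  "nat \<Rightarrow> nat \<Rightarrow> nat \<Rightarrow> real \<Rightarrow> (nat \<Rightarrow> 'u::finite set pmf) \<Rightarrow> (nat \<Rightarrow> 'u set \<Rightarrow> 'u strategy pmf)
     \<Rightarrow> nat \<Rightarrow> real pmf" where
  "bp_game m k t \<delta> A1 A2 sec = do {
     S \<leftarrow> A1 sec;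
     h \<leftarrow> MB_hashes m k;
     \<sigma> \<leftarrow> A2 sec S;
     let M = bf_encode k h S;
     return_pmf (case run_strategy \<sigma> (bf_query k h M) t [] of
                   None \<Rightarrow> 0
                 | Some (qs, (b, x)) \<Rightarrow> bp_profit \<delta> b (x \<notin> S \<and> bf_query k h M x))
   }"

definition negligible :: "(nat \<Rightarrow> real) \<Rightarrow> bool" where
  "negligible f \<longleftrightarrow> (\<forall>c::nat. \<exists>N. \<forall>sec\<ge>N. \<bar>f sec\<bar> < 1 / real sec ^ c)"

definition MB_BP_resilient :: "'u::finite itself \<Rightarrow> nat \<Rightarrow> nat \<Rightarrow> nat \<Rightarrow> nat \<Rightarrow> real \<Rightarrow> bool" where
  "MB_BP_resilient _ m k n t \<delta> \<longleftrightarrow>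
     (\<forall>(A1 :: nat \<Rightarrow> 'u set pmf) A2. valid_adversary n t A1 A2 \<longrightarrow>
        (\<exists>negl. negligible negl \<and>
           (\<forall>sec. measure_pmf.expectation (bp_game m k t \<delta> A1 A2 sec) (\<lambda>r. r) \<le> negl sec)))"

end

theory Submission
  imports Defs
begin

theorem mainTheorem5:
  fixes m k n t :: nat and \<delta> :: real
  assumes "0 < m"
    and "n < CARD('u::finite)"
    and "0 < \<delta>" and "\<delta> < 1"
    and "\<delta> < sat_prob TYPE('u) m k n"
  shows "\<not> MB_BP_resilient TYPE('u) m k n t \<delta>"
proof
  assume res: "MB_BP_resilient TYPE('u) m k n t \<delta>"
  define S0 :: "'u set" where "S0 = (SOME S :: 'u set. card S = n)"
  have "\<exists>S :: 'u set. card S = n"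
    using assms(2) by (meson less_imp_le obtain_subset_with_card_n)
  hence cS0: "card S0 = n" unfolding S0_def by (rule someI_ex)
  have "UNIV - S0 \<noteq> {}"
  proof
    assume "UNIV - S0 = {}"
    hence "S0 = UNIV" by blast
    thus False using cS0 assms(2) by simp
  qed
  then obtain x0 where x0: "x0 \<notin> S0" by blast
  define \<sigma> :: "'u strategy" where "\<sigma> = (\<lambda>_. Inr (True, x0))"
  define A1 :: "nat \<Rightarrow> 'u set pmf" where "A1 = (\<lambda>_. return_pmf S0)"
  define A2 :: "nat \<Rightarrow> 'u set \<Rightarrow> 'u strategy pmf" where "A2 = (\<lambda>_ _. return_pmf \<sigma>)"
  have run: "run_strategy \<sigma> orc t [] = Some ([], (True, x0))" for orc
    by (cases t) (simp_all add: \<sigma>_def)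
  have valid: "valid_adversary n t A1 A2"
    unfolding valid_adversary_def A1_def A2_def using cS0 x0 run by auto
  define Q where "Q = {h. x0 \<notin> S0 \<and> bf_query k h (bf_encode k h S0) x0}"
  define p where "p = (MB_hashes m k :: (nat \<times> 'u \<Rightarrow> nat) pmf)"
  define P where "P = measure_pmf.prob p Q"
  have game: "bp_game m k t \<delta> A1 A2 sec = map_pmf (\<lambda>h. bp_profit \<delta> True (h \<in> Q)) p" for sec
    unfolding bp_game_def A1_def A2_def p_def Q_def map_pmf_def
    by (simp add: run bind_return_pmf)
  have gexp: "bp_profit \<delta> True (h \<in> Q) = - 1 / (1 - \<delta>) + (1/\<delta> + 1/(1-\<delta>)) * indicator Q h" for h
    by (simp add: bp_profit_def indicator_def)
  have E: "measure_pmf.expectation (bp_game m k t \<delta> A1 A2 sec) (\<lambda>r. r) = - 1 / (1 - \<delta>) + (1/\<delta> + 1/(1-\<delta>)) * P" for sec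
    unfolding game P_def gexp
    by (simp add: integral_indicator measure_pmf.emeasure_eq_measure)
  have fin: "finite (hash_space m k :: (nat \<times> 'u \<Rightarrow> nat) set)"
    unfolding hash_space_def by (intro finite_PiE) auto
  have ne: "(hash_space m k :: (nat \<times> 'u \<Rightarrow> nat) set) \<noteq> {}"
    unfolding hash_space_def using assms(1) by (auto simp: PiE_eq_empty_iff)
  have sp: "set_pmf p = hash_space m k"
    unfolding p_def MB_hashes_def using fin ne by simp
  have "sat_prob TYPE('u) m k n = measure_pmf.prob p {h. bf_encode k h S0 = {..<m}}"
    unfolding sat_prob_def sat_prob_of_def S0_def p_def ..
  also have "\<dots> \<le> P"
    unfolding P_def
  proof (rule measure_pmf.finite_measure_mono_AE)
    show "AE h\<in>{h. bf_encode k h S0 = {..<m}} in measure_pmf p. h \<in> Q"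
    proof (rule AE_pmfI)
      fix h assume h: "h \<in> set_pmf p"
      have "h (i, x0) < m" if "i < k" for i
        using h that unfolding sp hash_space_def by (auto simp: PiE_iff)
      thus "h \<in> {h. bf_encode k h S0 = {..<m}} \<longrightarrow> h \<in> Q"
        unfolding Q_def bf_query_def using x0 by auto
    qed
  qed simp
  finally have Pd: "\<delta> < P" using assms(5) by simp
  define c where "c = - 1 / (1 - \<delta>) + (1/\<delta> + 1/(1-\<delta>)) * P"
  have d1: "1 - \<delta> \<noteq> 0" "\<delta> \<noteq> 0" using assms(3,4) by auto
  have "c = (P - \<delta>) / (\<delta> * (1 - \<delta>))"
    unfolding c_def using d1 by (simp add: divide_simps)
  hence cpos: "c > 0" using Pd assms(3,4) by simp
  obtain negl where ng: "negligible negl" and le: "\<And>sec. c \<le> negl sec"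
  proof -
    from res valid obtain negl where "negligible negl"
      "\<forall>sec. measure_pmf.expectation (bp_game m k t \<delta> A1 A2 sec) (\<lambda>r. r) \<le> negl sec"
      unfolding MB_BP_resilient_def by blast
    thus ?thesis using that E unfolding c_def by metis
  qed
  obtain N where N: "\<And>sec. sec \<ge> N \<Longrightarrow> \<bar>negl sec\<bar> < 1 / real sec ^ 1"
    using ng unfolding negligible_def by blast
  obtain s :: nat where s: "s > max N (nat \<lceil>1 / c\<rceil>)" by (meson lessI)
  have "c \<le> \<bar>negl s\<bar>" using le[of s] by linarith
  also have "\<dots> < 1 / real s" using N[of s] s by simp
  finally have "c * real s < 1" using s by (simp add: field_simps)
  moreover have "1 / c < real s" using s by linarith
  hence "1 < c * real s" using cpos by (simp add: field_simps)
  ultimately show False by linarith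
qed
end
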